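(* Consider the compulsory constrained two-facility location setting described in the context, with $n$ agents at locations $\mathbf{x}=(x_1,\dots,x_n)\in\mathbb{R}^n$ and alternative multiset $A=\{a_1\le a_2\le\dots\le a_m\}$, $m\ge 2$. Fix any $i\in\{1,\dots,n\}$ and let $\mathbf{x}_{(i)}$ be the $i$-th smallest entry of $\mathbf{x}$. The mechanism that, on every reported profile $\mathbf{x}$, outputs the peak of the point $\mathbf{x}_{(i)}$ in $AP$ (i.e. the pair $(a_k,a_{k+1})$ with $\mathbf{x}_{(i)}\in Z_k$) is group strategyproof.
   Context: Agents $1,\dots,n$ have private locations $x_j\in\mathbb{R}$ and each is served by both facilities $F_1,F_2$. $A=\{a_1,\dots,a_m\}$ is a multiset of real alternative locations with $a_1\le\dots\le a_m$; a feasible outcome places $F_1$ at $y_1\in A$ and $F_2$ at $y_2\in A\setminus\{y_1\}$ (removing one copy from the multiset), i.e. at most one facility per element of $A$. The cost of agent $j$ under $\mathbf{y}=(y_1,y_2)$ is $c_j(\mathbf{y},x_j)=\max\{|y_1-x_j|,|y_2-x_j|\}$. Let $AP=\{(a_1,a_2),(a_2,a_3),\dots,(a_{m-1},a_m)\}$. The zones are $Z_1=(-\infty,\frac{a_1+a_3}{2}]$, $Z_k=(\frac{a_{k-1}+a_{k+1}}{2},\frac{a_k+a_{k+2}}{2}]$ for $2\le k\le m-2$, $Z_{m-1}=(\frac{a_{m-2}+a_m}{2},\infty)$ (with $Z_1=\mathbb{R}$ if $m=2$); they partition $\mathbb{R}$, and the peak in $AP$ of a point $z\in Z_k$ is $(a_k,a_{k+1})$.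 A mechanism maps reported locations to a feasible outcome. It is group strategyproof if for every true profile $\mathbf{x}$, every nonempty $S\subseteq N$ and every misreport $\mathbf{x}'_S$, some $j\in S$ satisfies $c_j(f(\mathbf{x}),x_j)\le c_j(f(\mathbf{x}'_S,\mathbf{x}_{-S}),x_j)$. *)

theory Defs
  imports Main "HOL-Library.Multiset" Complex_Main
begin

(* Alternatives: the multiset A = {a_1 <= ... <= a_m} is given as a sorted list a,
   with a_{k+1} = a ! k (0-indexed). Agents are 0..n-1, profiles are nat => real. *)

type_synonym profile = "nat \<Rightarrow> real"
type_synonym outcome = "real \<times> real"

definition cost :: "outcome \<Rightarrow> real \<Rightarrow> real" where
  "cost y x = max \<bar>fst y - x\<bar> \<bar>snd y - x\<bar>"

(* Zone Z_{k+1} (0-indexed k, 0 <= k <= m-2), peak (a!k, a!(k+1)) *)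
definition in_zone :: "real list \<Rightarrow> nat \<Rightarrow> real \<Rightarrow> bool" where
  "in_zone a k z \<longleftrightarrow> k \<le> length a - 2 \<and>
     (k = 0 \<or> (a ! (k - 1) + a ! (k + 1)) / 2 < z) \<and>
     (k = length a - 2 \<or> z \<le> (a ! k + a ! (k + 2)) / 2)"

definition peak :: "real list \<Rightarrow> real \<Rightarrow> outcome" where
  "peak a z = (let k = (THE k. in_zone a k z) in (a ! k, a ! (k + 1)))"

definition order_stat :: "nat \<Rightarrow> nat \<Rightarrow> profile \<Rightarrow> real" where
  "order_stat n i x = sort (map x [0..<n]) ! (i - 1)"

definition peak_mechanism :: "real list \<Rightarrow> nat \<Rightarrow> nat \<Rightarrow> profile \<Rightarrow> outcome" where
  "peak_mechanism a n i x = peak a (order_stat n i x)"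

definition group_strategyproof :: "nat \<Rightarrow> (profile \<Rightarrow> outcome) \<Rightarrow> bool" where
  "group_strategyproof n f \<longleftrightarrow>
     (\<forall>x S x'. S \<subseteq> {0..<n} \<and> S \<noteq> {} \<longrightarrow>
        (\<exists>j\<in>S. cost (f x) (x j)
                 \<le> cost (f (\<lambda>l. if l \<in> S then x' l else x l)) (x j)))"

end

theory Submission
  imports Defs
begin

definition thr :: "real list \<Rightarrow> nat \<Rightarrow> real" where
  "thr a l = (a ! l + a ! (l + 2)) / 2"

lemma thr_mono:
  assumes "sorted a" "l \<le> l'" "l' + 2 < length a"
  shows "thr a l \<le> thr a l'"
  using sorted_nth_mono[OF assms(1), of l l'] sorted_nth_mono[OF assms(1), of "l+2" "l'+2"] assms
  unfolding thr_def by auto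

lemma in_zone_thr:
  "in_zone a k z \<longleftrightarrow> k \<le> length a - 2 \<and> (k = 0 \<or> thr a (k - 1) < z) \<and>
     (k = length a - 2 \<or> z \<le> thr a k)"
proof -
  have "k \<noteq> 0 \<Longrightarrow> k - 1 + 2 = k + 1" by simp
  then show ?thesis unfolding in_zone_def thr_def by (cases k) auto
qed

lemma zone_mono:
  assumes "sorted a" "length a \<ge> 2" "in_zone a j x" "in_zone a k z" "x \<le> z"
  shows "j \<le> k"
proof (rule ccontr)
  assume "\<not> j \<le> k"
  hence kj: "k < j" by simp
  have j: "j \<le> length a - 2" "j \<noteq> 0" "thr a (j - 1) < x" using assms(3) kj unfolding in_zone_thr by auto
  have "k \<noteq> length a - 2" using j kj by auto
  hence "z \<le> thr a k" using assms(4) unfolding in_zone_thr by auto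
  moreover have "thr a k \<le> thr a (j - 1)" using thr_mono[OF assms(1), of k "j - 1"] kj j assms(2) by auto
  ultimately show False using j assms(5) by auto
qed

lemma zone_unique:
  assumes "sorted a" "length a \<ge> 2" "in_zone a j x" "in_zone a k x"
  shows "j = k"
  using zone_mono[OF assms(1,2,3,4)] zone_mono[OF assms(1,2,4,3)] by auto

lemma zone_exists:
  assumes "sorted a" "length a \<ge> 2"
  shows "\<exists>k. in_zone a k z"
proof (cases "\<exists>l. l < length a - 2 \<and> thr a l < z")
  case False
  then show ?thesis unfolding in_zone_thr
    using False by (rule_tac x=0 in exI) (cases "length a - 2 = 0"; force simp: not_less)
next
  case True
  define S where "S = {l. l < length a - 2 \<and> thr a l < z}"
  have fin: "finite S" unfolding S_def by auto
  have ne: "S \<noteq> {}" using True unfolding S_def by auto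
  define k where "k = Suc (Max S)"
  have mS: "Max S \<in> S" using Max_in[OF fin ne] .
  have k1: "k \<le> length a - 2" using mS unfolding k_def S_def by auto
  have k2: "thr a (k - 1) < z" using mS unfolding k_def S_def by auto
  have k3: "z \<le> thr a k" if "k \<noteq> length a - 2"
  proof (rule ccontr)
    assume "\<not> z \<le> thr a k"
    hence "k \<in> S" using k1 that unfolding S_def by auto
    hence "k \<le> Max S" using fin by auto
    thus False unfolding k_def by auto
  qed
  show ?thesis unfolding in_zone_thr using k1 k2 k3 by blast
qed

lemma peak_eq:
  assumes "sorted a" "length a \<ge> 2" "in_zone a k z"
  shows "peak a z = (a ! k, a ! (k + 1))"
proof -
  have "(THE k. in_zone a k z) = k"
    using assms zone_unique[OF assms(1,2)] by (intro the_equality) auto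
  thus ?thesis unfolding peak_def by simp
qed

lemma cost_up:
  assumes "sorted a" "length a \<ge> 2" "j \<le> k" "k \<le> k'" "k' \<le> length a - 2"
    "j = length a - 2 \<or> x \<le> thr a j"
  shows "cost (a ! k, a ! (k + 1)) x \<le> cost (a ! k', a ! (k' + 1)) x"
proof (cases "k = k'")
  case True then show ?thesis by simp
next
  case False
  hence kk: "k < k'" using assms by auto
  hence xt: "2 * x \<le> a ! j + a ! (j + 2)" using assms unfolding thr_def by auto
  have m: "\<And>p q. p \<le> q \<Longrightarrow> q < length a \<Longrightarrow> a ! p \<le> a ! q"
    using sorted_nth_mono[OF assms(1)] by blast
  have c1: "a ! (j + 2) \<le> a ! (k' + 1)" using m[of "j+2" "k'+1"] kk assms by auto
  have c2: "a ! (k + 1) \<le> a ! (k' + 1)" using m[of "k+1" "k'+1"] kk assms by auto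
  have c3: "a ! j \<le> a ! (j + 1)" "a ! (j+1) \<le> a ! (j + 2)" using m[of j "j+1"] m[of "j+1" "j+2"] kk assms by auto
  have c4: "a ! k' \<le> a ! (k' + 1)" using m[of k' "k'+1"] kk assms by auto
  show ?thesis
  proof (cases "k = j")
    case True
    then show ?thesis using c1 c3 c4 xt unfolding cost_def by (auto simp: abs_if max_def)
  next
    case False
    hence jk: "j + 1 \<le> k" using assms by auto
    have d1: "a ! j \<le> a ! k" "a ! k \<le> a ! (k+1)" "a ! (j+2) \<le> a ! (k+1)"
      using m[of j k] m[of k "k+1"] m[of "j+2" "k+1"] jk kk assms by auto
    show ?thesis using c1 c2 c3 c4 d1 xt unfolding cost_def by (auto simp: abs_if max_def)
  qed
qed

lemma cost_down:
  assumes "sorted a" "length a \<ge> 2" "k' \<le> k" "k \<le> j" "j \<le> length a - 2"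
    "j = 0 \<or> thr a (j - 1) < x"
  shows "cost (a ! k, a ! (k + 1)) x \<le> cost (a ! k', a ! (k' + 1)) x"
proof (cases "k = k'")
  case True then show ?thesis by simp
next
  case False
  hence kk: "k' < k" using assms by auto
  hence j0: "j \<noteq> 0" using assms by auto
  hence jj: "j - 1 + 2 = j + 1" by simp
  have xt: "a ! (j - 1) + a ! (j + 1) < 2 * x" using assms j0 unfolding thr_def jj by auto
  have m: "\<And>p q. p \<le> q \<Longrightarrow> q < length a \<Longrightarrow> a ! p \<le> a ! q"
    using sorted_nth_mono[OF assms(1)] by blast
  have c1: "a ! k' \<le> a ! (j - 1)" using m[of k' "j-1"] kk assms by auto
  have c2: "a ! k' \<le> a ! k" using m[of k' k] kk assms by auto
  have c3: "a ! (j - 1) \<le> a ! j" "a ! j \<le> a ! (j + 1)" using m[of "j-1" j] m[of j "j+1"] kk assms by auto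
  have c4: "a ! k' \<le> a ! (k' + 1)" using m[of k' "k'+1"] kk assms by auto
  show ?thesis
  proof (cases "k = j")
    case True
    then show ?thesis using c1 c3 c4 xt unfolding cost_def by (auto simp: abs_if max_def)
  next
    case False
    hence jk: "k + 1 \<le> j" using assms by auto
    have d1: "a ! k \<le> a ! (j - 1)" "a ! k \<le> a ! (k+1)" "a ! (k+1) \<le> a ! j"
      using m[of k "j-1"] m[of k "k+1"] m[of "k+1" j] jk kk assms by auto
    show ?thesis using c1 c2 c3 c4 d1 xt unfolding cost_def by (auto simp: abs_if max_def)
  qed
qed

lemma key_up:
  assumes "sorted a" "length a \<ge> 2" "x \<le> z" "z \<le> z'"
  shows "cost (peak a z) x \<le> cost (peak a z') x"
proof -
  obtain j k k' where z: "in_zone a j x" "in_zone a k z" "in_zone a k' z'"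
    using zone_exists[OF assms(1,2)] by metis
  have "j \<le> k" "k \<le> k'" using zone_mono[OF assms(1,2)] z assms by auto
  moreover have "k' \<le> length a - 2" "j = length a - 2 \<or> x \<le> thr a j"
    using z unfolding in_zone_thr by auto
  ultimately show ?thesis using cost_up[OF assms(1,2)] peak_eq[OF assms(1,2)] z by simp
qed

lemma key_down:
  assumes "sorted a" "length a \<ge> 2" "z \<le> x" "z' \<le> z"
  shows "cost (peak a z) x \<le> cost (peak a z') x"
proof -
  obtain j k k' where z: "in_zone a j x" "in_zone a k z" "in_zone a k' z'"
    using zone_exists[OF assms(1,2)] by metis
  have "k \<le> j" "k' \<le> k" using zone_mono[OF assms(1,2)] z assms by auto
  moreover have "j \<le> length a - 2" "j = 0 \<or> thr a (j - 1) < x"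
    using z unfolding in_zone_thr by auto
  ultimately show ?thesis using cost_down[OF assms(1,2)] peak_eq[OF assms(1,2)] z by simp
qed


lemma os_char:
  fixes s :: "real list"
  assumes "sorted s" "\<And>v w. P v \<Longrightarrow> w \<le> v \<Longrightarrow> P w" "1 \<le> i" "i \<le> length s"
  shows "P (s ! (i - 1)) \<longleftrightarrow> i \<le> card {p. p < length s \<and> P (s ! p)}"
proof
  assume h: "P (s ! (i - 1))"
  have "{0..<i} \<subseteq> {p. p < length s \<and> P (s ! p)}"
  proof
    fix p assume "p \<in> {0..<i}"
    hence "p \<le> i - 1" "p < length s" using assms by auto
    thus "p \<in> {p. p < length s \<and> P (s ! p)}"
      using h assms(2) sorted_nth_mono[OF assms(1), of p "i - 1"] assms by auto
  qed
  from card_mono[OF _ this] show "i \<le> card {p. p < length s \<and> P (s ! p)}" by auto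
next
  assume h: "i \<le> card {p. p < length s \<and> P (s ! p)}"
  show "P (s ! (i - 1))"
  proof (rule ccontr)
    assume np: "\<not> P (s ! (i - 1))"
    have "{p. p < length s \<and> P (s ! p)} \<subseteq> {0..<i - 1}"
    proof
      fix p assume p: "p \<in> {p. p < length s \<and> P (s ! p)}"
      show "p \<in> {0..<i - 1}"
      proof (rule ccontr)
        assume "p \<notin> {0..<i - 1}"
        hence "i - 1 \<le> p" by auto
        hence "s ! (i - 1) \<le> s ! p" using sorted_nth_mono[OF assms(1)] p by auto
        thus False using p np assms(2) by auto
      qed
    qed
    from card_mono[OF _ this] have "card {p. p < length s \<and> P (s ! p)} \<le> i - 1" by auto
    thus False using h assms by auto
  qed
qed

lemma os_count:
  assumes "\<And>v w. P v \<Longrightarrow> w \<le> v \<Longrightarrow> P w" "1 \<le> i" "i \<le> n"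
  shows "P (order_stat n i x) \<longleftrightarrow> i \<le> card {l. l < n \<and> P (x l)}"
proof -
  define s where "s = sort (map x [0..<n])"
  have len: "length s = n" unfolding s_def by simp
  have "length (filter P s) = length (filter P (map x [0..<n]))"
    unfolding s_def by (metis mset_filter mset_sort size_mset)
  hence "card {p. p < length s \<and> P (s ! p)} = card {p. p < n - 0 \<and> P (map x [0..<n] ! p)}"
    unfolding length_filter_conv_card len length_map length_upt by simp
  also have "{p. p < n - 0 \<and> P (map x [0..<n] ! p)} = {l. l < n \<and> P (x l)}"
    by auto
  finally have eq: "card {p. p < length s \<and> P (s ! p)} = card {l. l < n \<and> P (x l)}" .
  show ?thesis using os_char[of s P i] assms len eq unfolding order_stat_def s_def[symmetric]
    unfolding s_def by simp
qed

theorem lemma1: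
  fixes a :: "real list" and n i :: nat
  assumes "sorted a" and "length a \<ge> 2"
    and "1 \<le> i" and "i \<le> n"
  shows "group_strategyproof n (peak_mechanism a n i)"
  unfolding group_strategyproof_def
proof (intro allI impI)
  fix x x' :: profile and S :: "nat set"
  assume S: "S \<subseteq> {0..<n} \<and> S \<noteq> {}"
  define y where "y = (\<lambda>l. if l \<in> S then x' l else x l)"
  define z where "z = order_stat n i x"
  define z' where "z' = order_stat n i y"
  have pm: "peak_mechanism a n i x = peak a z" "peak_mechanism a n i y = peak a z'"
    unfolding peak_mechanism_def z_def z'_def by auto
  have "\<exists>j\<in>S. cost (peak a z) (x j) \<le> cost (peak a z') (x j)"
  proof (cases "z < z'")
    case True
    have d: "\<And>v w. v \<le> z \<Longrightarrow> w \<le> v \<Longrightarrow> w \<le> z" by auto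
    have c1: "i \<le> card {l. l < n \<and> x l \<le> z}"
      using os_count[where P="\<lambda>v. v \<le> z" and x=x, OF d assms(3,4)] z_def by simp
    have c2: "\<not> i \<le> card {l. l < n \<and> y l \<le> z}"
      using os_count[where P="\<lambda>v. v \<le> z" and x=y, OF d assms(3,4)] z'_def True by simp
    have "\<not> {l. l < n \<and> x l \<le> z} \<subseteq> {l. l < n \<and> y l \<le> z}"
      using card_mono[of "{l. l < n \<and> y l \<le> z}" "{l. l < n \<and> x l \<le> z}"] c1 c2 by auto
    then obtain l where l: "l < n" "x l \<le> z" "\<not> y l \<le> z" by auto
    hence "l \<in> S" unfolding y_def by (auto split: if_splits)
    moreover have "cost (peak a z) (x l) \<le> cost (peak a z') (x l)"
      using key_up[OF assms(1,2) l(2)] True by auto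
    ultimately show ?thesis by blast
  next
    case False
    show ?thesis
    proof (cases "z = z'")
      case True
      then show ?thesis using S by auto
    next
      case False2: False
      hence lt: "z' < z" using False by auto
      have d: "\<And>v w. v < z \<Longrightarrow> w \<le> v \<Longrightarrow> w < z" by auto
      have c1: "\<not> i \<le> card {l. l < n \<and> x l < z}"
        using os_count[where P="\<lambda>v. v < z" and x=x, OF d assms(3,4)] z_def by simp
      have c2: "i \<le> card {l. l < n \<and> y l < z}"
        using os_count[where P="\<lambda>v. v < z" and x=y, OF d assms(3,4)] z'_def lt by simp
      have "\<not> {l. l < n \<and> y l < z} \<subseteq> {l. l < n \<and> x l < z}"
        using card_mono[of "{l. l < n \<and> x l < z}" "{l. l < n \<and> y l < z}"] c1 c2 by auto
      then obtain l where l: "l < n" "y l < z" "\<not> x l < z" by auto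
      hence "l \<in> S" unfolding y_def by (auto split: if_splits)
      moreover have "cost (peak a z) (x l) \<le> cost (peak a z') (x l)"
        using key_down[OF assms(1,2), of z "x l" z'] l lt by auto
      ultimately show ?thesis by blast
    qed
  qed
  thus "\<exists>j\<in>S. cost (peak_mechanism a n i x) (x j)
          \<le> cost (peak_mechanism a n i (\<lambda>l. if l \<in> S then x' l else x l)) (x j)"
    using pm unfolding y_def by simp
qed

end
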